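(* Let $L,R$ be positive integers and let $p=p_{-L}\cdots p_{-1}\,X\,p_1\cdots p_R$ be an injective pattern. Let $f:\{0,1\}^{L+R+1}\to\{0,1\}$ be the injective pattern-induced rule of $p$, i.e. $f(a_{-L},\dots,a_0,\dots,a_R)=1-a_0$ if $a_i=p_i$ for all $i\in\{-L,\dots,R\}\setminus\{0\}$, and $f(a_{-L},\dots,a_R)=a_0$ otherwise. Then the global transformation $\tau:\{0,1\}^{\mathbb{Z}}\to\{0,1\}^{\mathbb{Z}}$, $\tau(c)_n=f(c_{n-L},\dots,c_{n+R})$, is injective.
   Context: Patterns are finite words over the alphabet $\{0,1,X\}$, where $X$ is a wildcard standing for either state $0$ or $1$. Two words $u=u_1\cdots u_\ell$ and $v=v_1\cdots v_\ell$ of the same length over $\{0,1,X\}$ are called equal if for every position $t$ either $u_t=v_t$ or at least one of $u_t,v_t$ is $X$; otherwise they are unequal (i.e. there is a position $t$ with $u_t,v_t\in\{0,1\}$ and $u_t\neq v_t$). For a word $w=w_{-L}\cdots w_{-1}Xw_1\cdots w_R$ with $w_i\in\{0,1\}$ for $i\neq 0$ and the wildcard $X$ in position $0$, its prefix substring of length $\ell$ is $w_{-L}\cdots w_{-L+\ell-1}$ and its suffix substring of length $\ell$ is $w_{R-\ell+1}\cdots w_R$ ($1\le \ell\le L+R$). Such a word is an injective pattern if: when $L\le R$, for every $\ell$ with $L+1\le \ell\le L+R$ (i.e. every prefix substring containing $X$) the prefix substring of length $\ell$ is unequal to the suffix substring of length $\ell$; and when $L>R$, for every $\ell$ with $R+1\le\ell\le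 L+R$ (every suffix substring containing $X$) the suffix substring of length $\ell$ is unequal to the prefix substring of length $\ell$. (For example, for $L=1,R=3$ the injective patterns are $0X011$, $0X110$, $1X001$, $1X100$.) The injective pattern-induced rule flips the centre cell exactly when the neighbourhood matches the pattern (with the centre arbitrary) and leaves it unchanged otherwise. $\tau$ is injective if $c_1\ne c_2$ implies $\tau(c_1)\ne\tau(c_2)$. *)

theory Defs
  imports Main
begin

datatype sym = S0 | S1 | SX

definition words_equal :: "sym list \<Rightarrow> sym list \<Rightarrow> bool" where
  "words_equal u v \<longleftrightarrow> length u = length v \<and>
     (\<forall>t < length u. u ! t = v ! t \<or> u ! t = SX \<or> v ! t = SX)"

text \<open>A word w = w_{-L}..w_{-1} X w_1..w_R is stored as a list of length L+R+1;
  list index k corresponds to position k - L.\<close>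
definition prefix_sub :: "sym list \<Rightarrow> nat \<Rightarrow> sym list" where
  "prefix_sub w l = take l w"

definition suffix_sub :: "sym list \<Rightarrow> nat \<Rightarrow> sym list" where
  "suffix_sub w l = drop (length w - l) w"

definition injective_pattern :: "nat \<Rightarrow> nat \<Rightarrow> sym list \<Rightarrow> bool" where
  "injective_pattern L R w \<longleftrightarrow>
     length w = L + R + 1 \<and> w ! L = SX \<and> (\<forall>k < length w. k \<noteq> L \<longrightarrow> w ! k \<noteq> SX) \<and>
     (if L \<le> R then (\<forall>l \<in> {L+1..L+R}. \<not> words_equal (prefix_sub w l) (suffix_sub w l))
      else (\<forall>l \<in> {R+1..L+R}. \<not> words_equal (suffix_sub w l) (prefix_sub w l)))"

text \<open>Cell state 1 is True, 0 is False.\<close>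
fun sym_matches :: "sym \<Rightarrow> bool \<Rightarrow> bool" where
  "sym_matches S0 b = (\<not> b)"
| "sym_matches S1 b = b"
| "sym_matches SX b = True"

definition pat_at :: "nat \<Rightarrow> sym list \<Rightarrow> int \<Rightarrow> sym" where
  "pat_at L w i = w ! nat (i + int L)"

definition pattern_rule :: "nat \<Rightarrow> nat \<Rightarrow> sym list \<Rightarrow> (int \<Rightarrow> bool) \<Rightarrow> bool" where
  "pattern_rule L R w a =
     (if \<forall>i \<in> {- int L .. int R} - {0}. sym_matches (pat_at L w i) (a i)
      then \<not> a 0 else a 0)"

definition global_map :: "nat \<Rightarrow> nat \<Rightarrow> sym list \<Rightarrow> (int \<Rightarrow> bool) \<Rightarrow> (int \<Rightarrow> bool)" where
  "global_map L R w c = (\<lambda>n. pattern_rule L R w (\<lambda>i. c (n + i)))"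

end

theory Submission
  imports Defs
begin

definition Mt :: "nat \<Rightarrow> nat \<Rightarrow> sym list \<Rightarrow> (int \<Rightarrow> bool) \<Rightarrow> int \<Rightarrow> bool" where
  "Mt L R p c n \<longleftrightarrow> (\<forall>k<L+R+1. k \<noteq> L \<longrightarrow> sym_matches (p!k) (c (n + int k - int L)))"

lemma Mt_iff:
  "(\<forall>i \<in> {- int L .. int R} - {0}. sym_matches (pat_at L p i) (c (n + i))) \<longleftrightarrow> Mt L R p c n"
proof
  assume H: "\<forall>i \<in> {- int L .. int R} - {0}. sym_matches (pat_at L p i) (c (n + i))"
  show "Mt L R p c n" unfolding Mt_def
  proof (intro allI impI)
    fix k assume "k < L+R+1" "k \<noteq> L"
    then have "int k - int L \<in> {- int L .. int R} - {0}" by auto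
    from H[rule_format, OF this] show "sym_matches (p!k) (c (n + int k - int L))"
      by (simp add: pat_at_def algebra_simps)
  qed
next
  assume H: "Mt L R p c n"
  show "\<forall>i \<in> {- int L .. int R} - {0}. sym_matches (pat_at L p i) (c (n + i))"
  proof
    fix i assume i: "i \<in> {- int L .. int R} - {0}"
    define k where "k = nat (i + int L)"
    have "k < L+R+1" "k \<noteq> L" "int k = i + int L" using i by (auto simp: k_def)
    with H show "sym_matches (pat_at L p i) (c (n + i))"
      unfolding Mt_def pat_at_def k_def[symmetric]
      by (metis add_diff_cancel_right' add_diff_eq)
  qed
qed

lemma gm: "global_map L R p c n = (if Mt L R p c n then \<not> c n else c n)"
  unfolding global_map_def pattern_rule_def Mt_iff by simp

lemma sym_eq: "a \<noteq> SX \<Longrightarrow> b \<noteq> SX \<Longrightarrow> sym_matches a v \<Longrightarrow> sym_matches b v \<Longrightarrow> a = b"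
  by (cases a; cases b; auto)

lemma we_sym: "words_equal u v \<Longrightarrow> words_equal v u"
  unfolding words_equal_def by auto

lemma ovl:
  assumes ip: "injective_pattern L R p" and M1: "Mt L R p c1 m" and M2: "Mt L R p c2 n"
    and d: "n = m + int d" and d1: "1 \<le> d" and d2: "d \<le> max L R"
    and agree: "\<forall>x. n - int L \<le> x \<longrightarrow> x \<le> m + int R \<longrightarrow> x \<noteq> m \<longrightarrow> x \<noteq> n \<longrightarrow> c1 x = c2 x"
  shows False
proof -
  have len: "length p = L+R+1" and pL: "p!L = SX" and nx: "\<forall>k<length p. k\<noteq>L \<longrightarrow> p!k \<noteq> SX"
    using ip unfolding injective_pattern_def by auto
  define l where "l = L+R+1-d"
  have we: "words_equal (take l p) (drop d p)"
    unfolding words_equal_def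
  proof (intro conjI allI impI)
    show "length (take l p) = length (drop d p)" using len d2 by (simp add: l_def)
    fix t assume "t < length (take l p)"
    hence t: "t < l" using len by simp
    show "take l p ! t = drop d p ! t \<or> take l p ! t = SX \<or> drop d p ! t = SX"
    proof (cases "t = L \<or> d + t = L")
      case True then show ?thesis using pL t len d2 by (auto simp: l_def)
    next
      case False
      define x where "x = n + int t - int L"
      have k1: "d + t < L+R+1" "t < L+R+1" using t d2 by (auto simp: l_def)
      have e1: "m + int (d+t) - int L = x" by (simp add: x_def d)
      have s1: "sym_matches (p!(d+t)) (c1 x)"
        using M1[unfolded Mt_def, rule_format, of "d+t"] k1 False e1 by simp
      have s2: "sym_matches (p!t) (c2 x)"
        using M2[unfolded Mt_def, rule_format, of t] k1 False unfolding x_def by simp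
      have tl: "int t < int L + int R + 1 - int d" using t d2 unfolding l_def by linarith
      have ceq: "c1 x = c2 x"
      proof (rule agree[rule_format])
        show "n - int L \<le> x" unfolding x_def by simp
        show "x \<le> m + int R" unfolding x_def d using tl by linarith
        show "x \<noteq> m" unfolding x_def d using False by linarith
        show "x \<noteq> n" unfolding x_def using False by linarith
      qed
      have n1: "p!t \<noteq> SX" and n2: "p!(d+t) \<noteq> SX" using nx len k1 False by auto
      have s1': "sym_matches (p!(d+t)) (c2 x)" using s1 ceq by simp
      have "p!t = p!(d+t)" by (rule sym_eq[OF n1 n2 s2 s1'])
      then show ?thesis using t len d2 by (auto simp: l_def)
    qed
  qed
  show False
  proof (cases "L \<le> R")
    case True
    then have "l \<in> {L+1..L+R}" using d1 d2 by (auto simp: l_def)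
    with ip True have "\<not> words_equal (prefix_sub p l) (suffix_sub p l)"
      unfolding injective_pattern_def by auto
    moreover have "length p - l = d" using len d2 by (auto simp: l_def)
    ultimately show False using we by (simp add: prefix_sub_def suffix_sub_def)
  next
    case False
    then have "l \<in> {R+1..L+R}" using d1 d2 by (auto simp: l_def)
    with ip False have "\<not> words_equal (suffix_sub p l) (prefix_sub p l)"
      unfolding injective_pattern_def by auto
    moreover have "length p - l = d" using len d2 by (auto simp: l_def)
    ultimately show False using we we_sym by (simp add: prefix_sub_def suffix_sub_def)
  qed
qed

lemma ovl':
  assumes ip: "injective_pattern L R p" and M1: "Mt L R p c1 a" and M2: "Mt L R p c2 b"
    and ne: "a \<noteq> b" and dist: "\<bar>b - a\<bar> \<le> int (max L R)"
    and agree: "\<forall>x. max a b - int L \<le> x \<longrightarrow> x \<le> min a b + int R \<longrightarrow> x \<noteq> a \<longrightarrow> x \<noteq> b \<longrightarrow> c1 x = c2 x"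
  shows False
proof (cases "a < b")
  case True
  show False
    apply (rule ovl[OF ip M1 M2, of "nat (b - a)"])
    using True dist agree by auto
next
  case False
  then have "b < a" using ne by auto
  show False
    apply (rule ovl[OF ip M2 M1, of "nat (a - b)"])
    using \<open>b < a\<close> dist agree by (auto simp: max_def min_def split: if_splits)
qed

lemma Mt_tau:
  assumes ip: "injective_pattern L R p"
  shows "Mt L R p (global_map L R p c) m \<longleftrightarrow> Mt L R p c m"
proof
  let ?c' = "global_map L R p c"
  have nooverlap: "\<not> Mt L R p c y" if "Mt L R p c x" "y \<noteq> x" "\<bar>y - x\<bar> \<le> int (max L R)" for x y
  proof
    assume "Mt L R p c y"
    show False by (rule ovl'[OF ip that(1) \<open>Mt L R p c y\<close>]) (use that in auto)
  qed
  {
    assume H: "Mt L R p c m"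
    show "Mt L R p ?c' m" unfolding Mt_def
    proof (intro allI impI)
      fix k assume k: "k < L+R+1" "k \<noteq> L"
      have "\<not> Mt L R p c (m + int k - int L)"
        by (rule nooverlap[OF H]) (use k in auto)
      then have "?c' (m + int k - int L) = c (m + int k - int L)" by (simp add: gm)
      then show "sym_matches (p!k) (?c' (m + int k - int L))"
        using H k unfolding Mt_def by auto
    qed
  }
  {
    assume H: "Mt L R p ?c' m"
    show "Mt L R p c m"
    proof (rule ccontr)
      assume "\<not> Mt L R p c m"
      then obtain k where k: "k < L+R+1" "k \<noteq> L" "\<not> sym_matches (p!k) (c (m + int k - int L))"
        unfolding Mt_def by auto
      define x where "x = m + int k - int L"
      have "sym_matches (p!k) (?c' x)" using H k unfolding Mt_def x_def by auto
      then have "?c' x \<noteq> c x" using k(3) unfolding x_def by force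
      then have Mx: "Mt L R p c x" by (auto simp: gm split: if_splits)
      show False
      proof (rule ovl'[OF ip H Mx])
        show "m \<noteq> x" using k by (auto simp: x_def)
        show "\<bar>x - m\<bar> \<le> int (max L R)" using k by (auto simp: x_def)
        show "\<forall>y. max m x - int L \<le> y \<longrightarrow> y \<le> min m x + int R \<longrightarrow> y \<noteq> m \<longrightarrow> y \<noteq> x \<longrightarrow> ?c' y = c y"
        proof (intro allI impI)
          fix y assume y: "max m x - int L \<le> y" "y \<le> min m x + int R" "y \<noteq> m" "y \<noteq> x"
          have "\<not> Mt L R p c y"
            by (rule nooverlap[OF Mx]) (use y in auto)
          then show "?c' y = c y" by (simp add: gm)
        qed
      qed
    qed
  }
qed

theorem theorem3p1:
  fixes L R :: nat and p :: "sym list"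
  assumes "L > 0" and "R > 0" and "injective_pattern L R p"
  shows "inj (global_map L R p)"
proof -
  have "global_map L R p (global_map L R p c) = c" for c
  proof
    fix n show "global_map L R p (global_map L R p c) n = c n"
      using Mt_tau[OF assms(3), of c n] by (simp add: gm)
  qed
  then show ?thesis by (metis injI)
qed

end
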